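(* Let $X\sim P_X$ be a real-valued random variable, let $Z\sim\mathcal{N}(0,1)$ be independent of $X$, set $Y=X+Z$, and fix $a>0$. Define the measure $\mu$ on $\mathbb{R}$ by $\mu(\mathrm{d}x)=\exp\!\left((1-a)\frac{x^2}{2}\right)P_X(\sqrt{a}\,\mathrm{d}x)$, i.e. $\mu$ has density $x\mapsto \exp((1-a)x^2/2)$ with respect to the measure $A\mapsto P_X(\sqrt a A)$. Let $\phi$ and $\Phi$ be the standard Gaussian pdf and cdf, and $g(x)=\max(\Phi(x),1-\Phi(x))$ (so $g'(x)=\mathsf{sign}(x)\phi(x)$). Then $\mathsf{m}(X\mid Y=y)=ay$ for all $y\in\mathbb{R}$ if and only if for all $y\in\mathbb{R}$ $$0=\int_{-\infty}^{\infty}\mathsf{sign}(x-y)\,\phi(y-x)\,\mu(\mathrm{d}x)=\int_{-\infty}^{\infty}g'(x-y)\,\mu(\mathrm{d}x).$$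
   Context: The conditional median is $\mathsf{m}(X\mid Y=y)=F^{-1}_{X\mid Y=y}(1/2)$, where $F_{X\mid Y=y}$ is the conditional cdf of $X$ given $Y=y$ and $F^{-1}(p)=\inf\{x\in\mathbb{R}: p\le F(x)\}$. *)

theory Defs
  imports "HOL-Probability.Probability"
begin

text \<open>Conditional cdf of X given Y = y, where Y = X + Z with Z ~ N(0,1) independent of X
  and PX the law of X.  Since Y has an everywhere positive density, the (canonical, continuous
  in y) regular conditional distribution is given by Bayes' formula.\<close>
definition gauss_cond_cdf :: "real measure \<Rightarrow> real \<Rightarrow> real \<Rightarrow> real" where
  "gauss_cond_cdf PX y t =
     (\<integral>x. indicator {..t} x * std_normal_density (y - x) \<partial>PX) /
     (\<integral>x. std_normal_density (y - x) \<partial>PX)"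

definition gen_inverse :: "(real \<Rightarrow> real) \<Rightarrow> real \<Rightarrow> real" where
  "gen_inverse F p = Inf {x. p \<le> F x}"

definition gauss_cond_median :: "real measure \<Rightarrow> real \<Rightarrow> real" where
  "gauss_cond_median PX y = gen_inverse (gauss_cond_cdf PX y) (1/2)"

definition mu_meas :: "real measure \<Rightarrow> real \<Rightarrow> real measure" where
  "mu_meas PX a = density (distr PX borel (\<lambda>x. x / sqrt a)) (\<lambda>x. ennreal (exp ((1 - a) * x\<^sup>2 / 2)))"

text \<open>Standard Gaussian cdf, g(x) = max(Phi x, 1 - Phi x), and the stated derivative
  g'(x) = sign(x) phi(x) (with the convention g'(0) = 0).\<close>
definition std_normal_cdf :: "real \<Rightarrow> real" where
  "std_normal_cdf x = measure (density lborel std_normal_density) {..x}"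

definition g_fun :: "real \<Rightarrow> real" where
  "g_fun x = max (std_normal_cdf x) (1 - std_normal_cdf x)"

definition g_prime :: "real \<Rightarrow> real" where
  "g_prime x = sgn x * std_normal_density x"

end

theory Submission
  imports Defs
begin

definition qq :: "real measure \<Rightarrow> real \<Rightarrow> real set \<Rightarrow> real" where
  "qq P w S = (\<integral>u. indicator S u * std_normal_density (w - u) \<partial>P)"

lemma phi_le1: "std_normal_density x \<le> 1"
proof -
  have e: "exp (- x\<^sup>2 / 2) \<le> 1" by simp
  have s: "1 \<le> sqrt (2*pi)" using pi_gt3 by simp
  have "1 / sqrt (2 * pi) \<le> 1" using s by simp
  then have "(1 / sqrt (2 * pi)) * exp (- x\<^sup>2 / 2) \<le> 1 * 1"
    using e by (intro mult_mono) auto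
  then show ?thesis by (simp add: std_normal_density_def)
qed

lemma phi_pos: "std_normal_density x > 0"
  by (simp add: normal_density_pos)

lemma phi_tilt: "std_normal_density (w' - u) = std_normal_density (w - u) * (exp ((w' - w) * u) * exp ((w\<^sup>2 - w'\<^sup>2) / 2))"
proof -
  have "- (w' - u)\<^sup>2 / 2 = - (w - u)\<^sup>2 / 2 + ((w' - w) * u + (w\<^sup>2 - w'\<^sup>2) / 2)"
    by (simp add: power2_eq_square field_simps)
  then show ?thesis by (simp add: std_normal_density_def exp_add[symmetric])
qed

lemma phi_cont: "isCont std_normal_density x"
  unfolding normal_density_def by (intro continuous_intros) auto

context
  fixes P :: "real measure"
  assumes PS: "prob_space P" and sP: "sets P = sets borel"
begin

lemma measP: assumes "f \<in> borel_measurable borel" shows "f \<in> borel_measurable P"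
  by (subst measurable_cong_sets[OF sP refl]) (rule assms)

lemma integ_b: fixes f :: "real \<Rightarrow> real" and B :: real shows "f \<in> borel_measurable borel \<Longrightarrow> (\<And>x. \<bar>f x\<bar> \<le> B) \<Longrightarrow> integrable P f"
proof -
  assume f: "f \<in> borel_measurable borel" and b: "\<And>x. \<bar>f x\<bar> \<le> B"
  interpret prob_space P by (rule PS)
  show ?thesis
    by (rule integrable_const_bound[where B=B]) (use b measP[OF f] in auto)
qed

lemma mphi: "S \<in> sets borel \<Longrightarrow> (\<lambda>u. indicator S u * std_normal_density (w - u)) \<in> borel_measurable borel"
proof -
  assume S: "S \<in> sets borel"
  have c: "(\<lambda>u. std_normal_density (w - u)) \<in> borel_measurable borel"
    by (rule borel_measurable_continuous_onI) (unfold normal_density_def, intro continuous_intros, auto)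
  show ?thesis by (intro borel_measurable_times borel_measurable_indicator S c)
qed

lemma integ: "S \<in> sets borel \<Longrightarrow> integrable P (\<lambda>u. indicator S u * std_normal_density (w - u))"
  by (rule integ_b[OF mphi, where B=1]) (auto simp: indicator_def phi_le1 abs_of_pos phi_pos)

lemma qq_nonneg: "qq P w S \<ge> 0"
  unfolding qq_def by (rule integral_nonneg_AE) (auto simp: phi_pos less_imp_le)

lemma qq_union: "S \<in> sets borel \<Longrightarrow> T \<in> sets borel \<Longrightarrow> S \<inter> T = {} \<Longrightarrow> qq P w (S \<union> T) = qq P w S + qq P w T"
proof -
  assume S: "S \<in> sets borel" and T: "T \<in> sets borel" and d: "S \<inter> T = {}"
  have "(\<lambda>u. indicator (S \<union> T) u * std_normal_density (w - u)) =
        (\<lambda>u. indicator S u * std_normal_density (w - u) + indicator T u * std_normal_density (w - u))"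
    using d by (auto simp: indicator_def fun_eq_iff)
  then show ?thesis unfolding qq_def using integ[OF S] integ[OF T] by simp
qed

lemma qq_mono: "S \<in> sets borel \<Longrightarrow> T \<in> sets borel \<Longrightarrow> S \<subseteq> T \<Longrightarrow> qq P w S \<le> qq P w T"
  unfolding qq_def
  by (rule integral_mono[OF integ integ]) (auto simp: indicator_def phi_pos less_imp_le)

lemma qq_pos: "qq P w UNIV > 0"
proof -
  interpret prob_space P by (rule PS)
  have i: "integrable P (\<lambda>u. indicator UNIV u * std_normal_density (w - u))" by (rule integ) simp
  have "qq P w UNIV \<noteq> 0"
  proof
    assume "qq P w UNIV = 0"
    then have "AE u in P. indicator UNIV u * std_normal_density (w - u) = 0"
      unfolding qq_def using integral_nonneg_eq_0_iff_AE[OF i] by (auto simp: phi_pos less_imp_le)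
    then have "AE u in P. False" by (simp add: phi_pos less_imp_neq[symmetric])
    then show False by simp
  qed
  then show ?thesis using qq_nonneg[of w UNIV] by linarith
qed

lemma tilt_lower:
  assumes "w' \<le> w" "S \<in> sets borel" "S \<subseteq> {..t}"
  shows "exp ((w' - w) * t) * exp ((w\<^sup>2 - w'\<^sup>2) / 2) * qq P w S \<le> qq P w' S"
proof -
  have "qq P w' S = (\<integral>u. indicator S u * std_normal_density (w - u) * (exp ((w' - w) * u) * exp ((w\<^sup>2 - w'\<^sup>2) / 2)) \<partial>P)"
    unfolding qq_def by (simp add: phi_tilt[of w' _ w] mult.assoc)
  also have "\<dots> \<ge> (\<integral>u. exp ((w' - w) * t) * exp ((w\<^sup>2 - w'\<^sup>2) / 2) * (indicator S u * std_normal_density (w - u)) \<partial>P)"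
  proof (rule integral_mono)
    show "integrable P (\<lambda>u. exp ((w' - w) * t) * exp ((w\<^sup>2 - w'\<^sup>2) / 2) * (indicator S u * std_normal_density (w - u)))"
      using integ[OF assms(2)] by simp
    have "integrable P (\<lambda>u. indicator S u * std_normal_density (w' - u))" by (rule integ[OF assms(2)])
    then show "integrable P (\<lambda>u. indicator S u * std_normal_density (w - u) * (exp ((w' - w) * u) * exp ((w\<^sup>2 - w'\<^sup>2) / 2)))"
      by (simp add: phi_tilt[of w' _ w] mult.assoc)
    fix u
    show "exp ((w' - w) * t) * exp ((w\<^sup>2 - w'\<^sup>2) / 2) * (indicator S u * std_normal_density (w - u))
       \<le> indicator S u * std_normal_density (w - u) * (exp ((w' - w) * u) * exp ((w\<^sup>2 - w'\<^sup>2) / 2))"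
    proof (cases "u \<in> S")
      case True
      then have "u \<le> t" using assms by auto
      then have "(w' - w) * t \<le> (w' - w) * u" using assms(1) by (simp add: mult_left_mono_neg)
      then have "exp ((w' - w) * t) \<le> exp ((w' - w) * u)" by simp
      then show ?thesis using True phi_pos[of "w - u"]
        by (simp add: mult_right_mono mult.commute mult.left_commute)
    qed simp
  qed
  finally show ?thesis by (simp add: qq_def)
qed

lemma tilt_upper:
  assumes "w' \<le> w" "S \<in> sets borel" "S \<subseteq> {t..}"
  shows "qq P w' S \<le> exp ((w' - w) * t) * exp ((w\<^sup>2 - w'\<^sup>2) / 2) * qq P w S"
proof -
  have "qq P w' S = (\<integral>u. indicator S u * std_normal_density (w - u) * (exp ((w' - w) * u) * exp ((w\<^sup>2 - w'\<^sup>2) / 2)) \<partial>P)"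
    unfolding qq_def by (simp add: phi_tilt[of w' _ w] mult.assoc)
  also have "\<dots> \<le> (\<integral>u. exp ((w' - w) * t) * exp ((w\<^sup>2 - w'\<^sup>2) / 2) * (indicator S u * std_normal_density (w - u)) \<partial>P)"
  proof (rule integral_mono)
    show "integrable P (\<lambda>u. exp ((w' - w) * t) * exp ((w\<^sup>2 - w'\<^sup>2) / 2) * (indicator S u * std_normal_density (w - u)))"
      using integ[OF assms(2)] by simp
    have "integrable P (\<lambda>u. indicator S u * std_normal_density (w' - u))" by (rule integ[OF assms(2)])
    then show "integrable P (\<lambda>u. indicator S u * std_normal_density (w - u) * (exp ((w' - w) * u) * exp ((w\<^sup>2 - w'\<^sup>2) / 2)))"
      by (simp add: phi_tilt[of w' _ w] mult.assoc)
    fix u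
    show "indicator S u * std_normal_density (w - u) * (exp ((w' - w) * u) * exp ((w\<^sup>2 - w'\<^sup>2) / 2))
       \<le> exp ((w' - w) * t) * exp ((w\<^sup>2 - w'\<^sup>2) / 2) * (indicator S u * std_normal_density (w - u))"
    proof (cases "u \<in> S")
      case True
      then have "t \<le> u" using assms by auto
      then have "(w' - w) * u \<le> (w' - w) * t" using assms(1) by (simp add: mult_left_mono_neg)
      then have "exp ((w' - w) * u) \<le> exp ((w' - w) * t)" by simp
      then show ?thesis using True phi_pos[of "w - u"]
        by (simp add: mult_right_mono mult.commute mult.left_commute)
    qed simp
  qed
  finally show ?thesis by (simp add: qq_def)
qed

lemma dconv:
  fixes f :: "nat \<Rightarrow> real \<Rightarrow> real" and g :: "real \<Rightarrow> real"
  assumes "\<And>n. f n \<in> borel_measurable borel" "g \<in> borel_measurable borel"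
    "\<And>n x. \<bar>f n x\<bar> \<le> 1" "\<And>x. (\<lambda>n. f n x) \<longlonglongrightarrow> g x"
  shows "(\<lambda>n. integral\<^sup>L P (f n)) \<longlonglongrightarrow> integral\<^sup>L P g"
proof (rule integral_dominated_convergence[where w="\<lambda>_. 1"])
  show "integrable P (\<lambda>_. 1::real)" by (rule integ_b[where B=1]) auto
qed (use assms measP in \<open>auto intro: measP\<close>)

lemma qq_cont: assumes "ws \<longlonglongrightarrow> w0" "S \<in> sets borel"
  shows "(\<lambda>n. qq P (ws n) S) \<longlonglongrightarrow> qq P w0 S"
  unfolding qq_def
proof (rule dconv)
  fix n x
  show "\<bar>indicator S x * std_normal_density (ws n - x)\<bar> \<le> 1"
    by (auto simp: indicator_def phi_le1 abs_of_pos phi_pos)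
  have "(\<lambda>n. std_normal_density (ws n - x)) \<longlonglongrightarrow> std_normal_density (w0 - x)"
    by (rule isCont_tendsto_compose[OF phi_cont]) (intro tendsto_intros assms(1))
  then show "(\<lambda>n. indicator S x * std_normal_density (ws n - x)) \<longlonglongrightarrow> indicator S x * std_normal_density (w0 - x)"
    by (intro tendsto_intros)
qed (use assms mphi in auto)

lemma qq_bot: "(\<lambda>n. qq P w {..- real n}) \<longlonglongrightarrow> 0"
proof -
  have "(\<lambda>n. qq P w {..- real n}) \<longlonglongrightarrow> (\<integral>u. 0 \<partial>P)"
    unfolding qq_def
  proof (rule dconv)
    fix n x
    show "\<bar>indicator {..- real n} x * std_normal_density (w - x)\<bar> \<le> 1"
      by (auto simp: indicator_def phi_le1 abs_of_pos phi_pos)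
    obtain N :: nat where N: "real N > - x" using reals_Archimedean2 by blast
    have "eventually (\<lambda>n. indicator {..- real n} x * std_normal_density (w - x) = 0) sequentially"
      unfolding eventually_sequentially
      by (rule exI[of _ N]) (use N in \<open>auto simp: indicator_def\<close>)
    then show "(\<lambda>n. indicator {..- real n} x * std_normal_density (w - x)) \<longlonglongrightarrow> 0"
      by (rule tendsto_eventually)
  qed (use mphi in auto)
  then show ?thesis by simp
qed

lemma qq_top: "(\<lambda>n. qq P w {..real n}) \<longlonglongrightarrow> qq P w UNIV"
  unfolding qq_def
proof (rule dconv)
  fix n x
  show "\<bar>indicator {..real n} x * std_normal_density (w - x)\<bar> \<le> 1"
    by (auto simp: indicator_def phi_le1 abs_of_pos phi_pos)
  obtain N :: nat where N: "real N > x" using reals_Archimedean2 by blast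
  have "eventually (\<lambda>n. indicator {..real n} x * std_normal_density (w - x) = indicator UNIV x * std_normal_density (w - x)) sequentially"
    unfolding eventually_sequentially
    by (rule exI[of _ N]) (use N in \<open>auto simp: indicator_def\<close>)
  then show "(\<lambda>n. indicator {..real n} x * std_normal_density (w - x)) \<longlonglongrightarrow> indicator UNIV x * std_normal_density (w - x)"
    by (rule tendsto_eventually)
qed (use mphi in auto)

lemma cdf_eq: "gauss_cond_cdf P w t = qq P w {..t} / qq P w UNIV"
  unfolding gauss_cond_cdf_def qq_def by simp

lemma H_eq: "(\<integral>u. sgn (u - s) * std_normal_density (w - u) \<partial>P) = qq P w {s<..} - qq P w {..<s}"
proof -
  have "(\<lambda>u. sgn (u - s) * std_normal_density (w - u)) =
     (\<lambda>u. indicator {s<..} u * std_normal_density (w - u) - indicator {..<s} u * std_normal_density (w - u))"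
    by (auto simp: fun_eq_iff indicator_def sgn_if)
  then show ?thesis unfolding qq_def using integ[of "{s<..}" w] integ[of "{..<s}" w] by simp
qed

lemma dec1: "qq P w UNIV = qq P w {..t} + qq P w {t<..}"
  by (subst qq_union[symmetric]) (auto intro: arg_cong[where f="qq P w"])

lemma dec2: "qq P w {..t} = qq P w {..<t} + qq P w {t}"
  by (subst qq_union[symmetric]) (auto intro: arg_cong[where f="qq P w"])

lemma dec3: "t < s \<Longrightarrow> qq P w {t<..} = qq P w {t<..s} + qq P w {s<..}"
  by (subst qq_union[symmetric]) (auto intro: arg_cong[where f="qq P w"])

lemma dec4: "t < s \<Longrightarrow> qq P w {..<s} = qq P w {..t} + qq P w {t<..<s}"
  by (subst qq_union[symmetric]) (auto intro: arg_cong[where f="qq P w"])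

lemma memS: "(1/2 \<le> gauss_cond_cdf P w t) \<longleftrightarrow> qq P w UNIV \<le> 2 * qq P w {..t}"
  using qq_pos[of w] by (simp add: cdf_eq field_simps)

lemma med_of_H:
  assumes a: "a > 0" and H: "\<And>w. qq P w {a*w<..} = qq P w {..<a*w}"
  shows "gauss_cond_median P w = a * w"
  unfolding gauss_cond_median_def gen_inverse_def
proof (rule cInf_eq_minimum)
  define s where "s = a * w"
  have Hs: "qq P w {s<..} = qq P w {..<s}" using H s_def by simp
  show "a * w \<in> {x. 1 / 2 \<le> gauss_cond_cdf P w x}"
    unfolding memS[folded s_def] mem_Collect_eq using dec1[of w s] dec2[of w s] Hs qq_nonneg[of w "{s}"]
    by (simp add: memS s_def)
  fix y assume "y \<in> {x. 1 / 2 \<le> gauss_cond_cdf P w x}"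
  then have yS: "qq P w UNIV \<le> 2 * qq P w {..y}" using memS[of w y] by simp
  show "a * w \<le> y"
  proof (rule ccontr)
    assume "\<not> a * w \<le> y"
    then have ys: "y < s" by (simp add: s_def)
    define m where "m = qq P w {..y}"
    have e1: "qq P w {y<..} \<le> m" using yS dec1[of w y] m_def by simp
    have e2: "qq P w {y<..} = qq P w {y<..s} + qq P w {s<..}" using dec3[OF ys] .
    have e3: "qq P w {..<s} = m + qq P w {y<..<s}" using dec4[OF ys] m_def by simp
    have n1: "qq P w {y<..s} \<ge> 0" "qq P w {y<..<s} \<ge> 0" by (rule qq_nonneg)+
    have z: "qq P w {y<..s} = 0" and ms: "qq P w {s<..} = m"
      using e1 e2 e3 n1 Hs by linarith+
    have mpos: "m > 0" using qq_pos[of w] dec1[of w y] e2 z ms m_def by linarith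
    define w' where "w' = (y / a + w) / 2"
    have ww: "w' < w" using ys a unfolding w'_def s_def by (simp add: field_simps)
    have s'1: "y < a * w'" and s'2: "a * w' < s" using ys a unfolding w'_def s_def by (simp_all add: field_simps)
    define K where "K = exp ((w\<^sup>2 - w'\<^sup>2) / 2)"
    have Kp: "K > 0" by (simp add: K_def)
    have Hw': "qq P w' {a*w'<..} = qq P w' {..<a*w'}" by (rule H)
    have "qq P w' {a*w'<..} \<le> qq P w' {y<..}" by (rule qq_mono) (use s'1 in auto)
    also have "\<dots> = qq P w' {y<..s} + qq P w' {s<..}" by (rule dec3[OF ys])
    also have "\<dots> \<le> exp ((w' - w) * y) * K * qq P w {y<..s} + exp ((w' - w) * s) * K * qq P w {s<..}"
      unfolding K_def by (intro add_mono tilt_upper) (use ww in auto)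
    also have "\<dots> = exp ((w' - w) * s) * K * m" using z ms by simp
    also have "\<dots> < exp ((w' - w) * y) * K * m"
    proof -
      have "(w' - w) * s < (w' - w) * y" using ww ys by (simp add: mult_strict_left_mono_neg)
      then have "exp ((w' - w) * s) < exp ((w' - w) * y)" by simp
      then show ?thesis using Kp mpos by simp
    qed
    also have "\<dots> \<le> qq P w' {..y}" unfolding K_def m_def by (rule tilt_lower) (use ww in auto)
    also have "\<dots> \<le> qq P w' {..<a*w'}" by (rule qq_mono) (use s'1 in auto)
    finally show False using Hw' by simp
  qed
qed

lemma med_props:
  assumes med: "gauss_cond_median P w = a * w"
  shows "t < a * w \<Longrightarrow> 2 * qq P w {..t} < qq P w UNIV"
    and "a * w < t \<Longrightarrow> qq P w UNIV \<le> 2 * qq P w {..t}"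
proof -
  define S where "S = {x. 1 / 2 \<le> gauss_cond_cdf P w x}"
  have SI: "x \<in> S \<longleftrightarrow> qq P w UNIV \<le> 2 * qq P w {..x}" for x using memS[of w x] by (simp add: S_def)
  have InfS: "Inf S = a * w" using med by (simp add: S_def gauss_cond_median_def gen_inverse_def)
  have D2: "qq P w UNIV / 2 < qq P w UNIV" using qq_pos[of w] by simp
  from order_tendstoD(1)[OF qq_top[of w] D2] obtain n :: nat where "qq P w UNIV / 2 < qq P w {..real n}"
    by (auto simp: eventually_sequentially)
  then have "real n \<in> S" by (simp add: SI)
  then have ne: "S \<noteq> {}" by auto
  have D3: "0 < qq P w UNIV / 2" using qq_pos[of w] by simp
  from order_tendstoD(2)[OF qq_bot[of w] D3] obtain k :: nat where k: "qq P w {..- real k} < qq P w UNIV / 2"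
    by (auto simp: eventually_sequentially)
  have bdd: "bdd_below S"
  proof (rule bdd_belowI)
    fix x assume "x \<in> S"
    then have x: "qq P w UNIV \<le> 2 * qq P w {..x}" by (simp add: SI)
    show "- real k \<le> x"
    proof (rule ccontr)
      assume "\<not> - real k \<le> x"
      then have "qq P w {..x} \<le> qq P w {..- real k}" by (intro qq_mono) auto
      then show False using x k by simp
    qed
  qed
  show "2 * qq P w {..t} < qq P w UNIV" if t: "t < a * w"
  proof (rule ccontr)
    assume "\<not> ?thesis"
    then have "t \<in> S" by (simp add: SI)
    then have "Inf S \<le> t" by (rule cInf_lower[OF _ bdd])
    then show False using t InfS by simp
  qed
  show "qq P w UNIV \<le> 2 * qq P w {..t}" if t: "a * w < t"
  proof -
    obtain x where x: "x \<in> S" "x < t" using cInf_lessD[OF ne, of t] t InfS by auto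
    have "qq P w {..x} \<le> qq P w {..t}" by (intro qq_mono) (use x in auto)
    then show ?thesis using x SI by force
  qed
qed

lemma H_of_med:
  assumes a: "a > 0" and med: "\<And>w. gauss_cond_median P w = a * w"
  shows "qq P w0 {a*w0<..} = qq P w0 {..<a*w0}"
proof -
  define s where "s = a * w0"
  let ?u = "\<lambda>n::nat. w0 + inverse (real (Suc n))"
  let ?l = "\<lambda>n::nat. w0 + - inverse (real (Suc n))"
  have u: "?u \<longlonglongrightarrow> w0" by (rule LIMSEQ_inverse_real_of_nat_add)
  have l: "?l \<longlonglongrightarrow> w0" by (rule LIMSEQ_inverse_real_of_nat_add_minus)
  have i: "2 * qq P w0 {..s} \<le> qq P w0 UNIV"
  proof (rule tendsto_le[OF _ qq_cont[OF u] tendsto_mult[OF tendsto_const qq_cont[OF u]]])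
    show "\<forall>\<^sub>F n in sequentially. 2 * qq P (?u n) {..s} \<le> qq P (?u n) UNIV"
    proof (rule always_eventually, rule allI)
      fix n
      have "s < a * ?u n" using a by (simp add: s_def algebra_simps)
      then show "2 * qq P (?u n) {..s} \<le> qq P (?u n) UNIV" using med_props(1)[OF med] by (simp add: less_imp_le)
    qed
  qed auto
  have ii: "qq P w0 UNIV \<le> 2 * qq P w0 {..<s}"
  proof (rule tendsto_le[OF _ tendsto_mult[OF tendsto_const qq_cont[OF l]] qq_cont[OF l]])
    show "\<forall>\<^sub>F n in sequentially. qq P (?l n) UNIV \<le> 2 * qq P (?l n) {..<s}"
    proof (rule always_eventually, rule allI)
      fix n
      have lt: "a * ?l n < s" using a by (simp add: s_def algebra_simps)
      define t where "t = (a * ?l n + s) / 2"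
      have gen: "\<And>x::real. x < s \<Longrightarrow> x < (x + s)/2 \<and> (x + s)/2 < s" by auto
      have t1: "a * ?l n < t" and t2: "t < s" using gen[OF lt] unfolding t_def by auto
      have "qq P (?l n) UNIV \<le> 2 * qq P (?l n) {..t}" by (rule med_props(2)[OF med t1])
      also have "qq P (?l n) {..t} \<le> qq P (?l n) {..<s}" by (intro qq_mono) (use t2 in auto)
      finally show "qq P (?l n) UNIV \<le> 2 * qq P (?l n) {..<s}" by simp
    qed
  qed auto
  have "qq P w0 {s} \<ge> 0" by (rule qq_nonneg)
  then show ?thesis using i ii dec1[of w0 s] dec2[of w0 s] unfolding s_def[symmetric] by linarith
qed

lemma core:
  assumes a: "a > 0"
  shows "(\<forall>w. gauss_cond_median P w = a * w) \<longleftrightarrow> (\<forall>w. qq P w {a*w<..} = qq P w {..<a*w})"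
  using med_of_H[OF a] H_of_med[OF a] by blast

end

lemma gprime_eq: "sgn (x - y) * std_normal_density (y - x) = g_prime (x - y)"
  unfolding g_prime_def by (simp add: std_normal_density_def power2_commute)

lemma pointwise_mu:
  assumes a: "a > 0"
  shows "exp ((1 - a) * (u / sqrt a)\<^sup>2 / 2) *\<^sub>R (sgn (u / sqrt a - y) * std_normal_density (y - u / sqrt a))
    = exp (y\<^sup>2 / (2 * a) - y\<^sup>2 / 2) * (sgn (u - a * (y / sqrt a)) * std_normal_density (y / sqrt a - u))"
proof -
  define r where "r = sqrt a"
  have r: "r > 0" "a = r\<^sup>2" using a by (auto simp: r_def)
  have sg: "sgn (u / r - y) = sgn (u - a * (y / r))"
  proof -
    have "u / r - y = (u - a * (y / r)) / r" using r by (simp add: field_simps power2_eq_square)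
    then show ?thesis using r by (simp add: sgn_divide)
  qed
  have ex: "(1 - a) * (u / r)\<^sup>2 / 2 + - (y - u / r)\<^sup>2 / 2 = (y\<^sup>2 / (2 * a) - y\<^sup>2 / 2) + - (y / r - u)\<^sup>2 / 2"
    using r by (simp add: field_simps power2_eq_square)
  have "exp ((1 - a) * (u / r)\<^sup>2 / 2) * std_normal_density (y - u / r) = exp (y\<^sup>2 / (2 * a) - y\<^sup>2 / 2) * std_normal_density (y / r - u)"
    unfolding std_normal_density_def using ex
    by (simp add: exp_add[symmetric] mult.left_commute)
  then show ?thesis unfolding r_def[symmetric] sg[symmetric] by (simp add: mult.left_commute)
qed

lemma mu_eq:
  assumes PS: "prob_space P" and sP: "sets P = sets borel" and a: "a > 0"
  shows "(\<integral>x. sgn (x - y) * std_normal_density (y - x) \<partial>(mu_meas P a))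
     = exp (y\<^sup>2 / (2 * a) - y\<^sup>2 / 2) * (qq P (y / sqrt a) {a * (y / sqrt a)<..} - qq P (y / sqrt a) {..<a * (y / sqrt a)})"
proof -
  have f: "(\<lambda>x. sgn (x - y) * std_normal_density (y - x)) \<in> borel_measurable borel"
    unfolding normal_density_def by measurable
  have g: "(\<lambda>x. exp ((1 - a) * x\<^sup>2 / 2)) \<in> borel_measurable borel" by measurable
  have h: "(\<lambda>x. x / sqrt a) \<in> measurable P borel" by (rule measP[OF PS sP]) measurable
  have "(\<integral>x. sgn (x - y) * std_normal_density (y - x) \<partial>(mu_meas P a))
      = (\<integral>x. exp ((1 - a) * x\<^sup>2 / 2) *\<^sub>R (sgn (x - y) * std_normal_density (y - x)) \<partial>(distr P borel (\<lambda>x. x / sqrt a)))"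
    unfolding mu_meas_def by (rule integral_density) (use f g in auto)
  also have "\<dots> = (\<integral>u. exp ((1 - a) * (u / sqrt a)\<^sup>2 / 2) *\<^sub>R (sgn (u / sqrt a - y) * std_normal_density (y - u / sqrt a)) \<partial>P)"
    by (rule integral_distr[OF h]) (use f g in measurable)
  also have "\<dots> = (\<integral>u. exp (y\<^sup>2 / (2 * a) - y\<^sup>2 / 2) * (sgn (u - a * (y / sqrt a)) * std_normal_density (y / sqrt a - u)) \<partial>P)"
    by (simp only: pointwise_mu[OF a])
  also have "\<dots> = exp (y\<^sup>2 / (2 * a) - y\<^sup>2 / 2) * (\<integral>u. sgn (u - a * (y / sqrt a)) * std_normal_density (y / sqrt a - u) \<partial>P)"
    by simp
  also have "\<dots> = exp (y\<^sup>2 / (2 * a) - y\<^sup>2 / 2) * (qq P (y / sqrt a) {a * (y / sqrt a)<..} - qq P (y / sqrt a) {..<a * (y / sqrt a)})"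
    by (simp only: H_eq[OF PS sP])
  finally show ?thesis .
qed

theorem proposition5:
  fixes M :: "'s measure" and X Z :: "'s \<Rightarrow> real" and a :: real
  assumes "prob_space M"
    and "X \<in> borel_measurable M" and "Z \<in> borel_measurable M"
    and "distributed M lborel Z std_normal_density"
    and "prob_space.indep_var M borel X borel Z"
    and "a > 0"
  shows "(\<forall>y::real. gauss_cond_median (distr M borel X) y = a * y) \<longleftrightarrow>
         (\<forall>y::real.
            0 = (\<integral>x. sgn (x - y) * std_normal_density (y - x) \<partial>(mu_meas (distr M borel X) a)) \<and>
            (\<integral>x. sgn (x - y) * std_normal_density (y - x) \<partial>(mu_meas (distr M borel X) a)) =
            (\<integral>x. g_prime (x - y) \<partial>(mu_meas (distr M borel X) a)))"
proof -
  define P where "P = distr M borel X"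
  have PS: "prob_space P" unfolding P_def by (rule prob_space.prob_space_distr[OF assms(1) assms(2)])
  have sP: "sets P = sets borel" unfolding P_def by simp
  have a: "a > 0" by fact
  have G: "(\<integral>x. sgn (x - y) * std_normal_density (y - x) \<partial>(mu_meas P a)) = (\<integral>x. g_prime (x - y) \<partial>(mu_meas P a))" for y
    by (simp add: gprime_eq)
  have R: "(\<forall>y. 0 = (\<integral>x. sgn (x - y) * std_normal_density (y - x) \<partial>(mu_meas P a))) \<longleftrightarrow>
           (\<forall>w. qq P w {a*w<..} = qq P w {..<a*w})"
  proof
    assume L: "\<forall>y. 0 = (\<integral>x. sgn (x - y) * std_normal_density (y - x) \<partial>(mu_meas P a))"
    show "\<forall>w. qq P w {a*w<..} = qq P w {..<a*w}"
    proof
      fix w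
      have "0 = exp ((sqrt a * w)\<^sup>2 / (2 * a) - (sqrt a * w)\<^sup>2 / 2) * (qq P (sqrt a * w / sqrt a) {a * (sqrt a * w / sqrt a)<..} - qq P (sqrt a * w / sqrt a) {..<a * (sqrt a * w / sqrt a)})"
        using L mu_eq[OF PS sP a, of "sqrt a * w"] by simp
      moreover have "sqrt a * w / sqrt a = w" using a by simp
      ultimately show "qq P w {a*w<..} = qq P w {..<a*w}" by simp
    qed
  next
    assume A: "\<forall>w. qq P w {a*w<..} = qq P w {..<a*w}"
    show "\<forall>y. 0 = (\<integral>x. sgn (x - y) * std_normal_density (y - x) \<partial>(mu_meas P a))"
    proof
      fix y
      have "qq P (y / sqrt a) {a * (y / sqrt a)<..} = qq P (y / sqrt a) {..<a * (y / sqrt a)}"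
        using A by blast
      then show "0 = (\<integral>x. sgn (x - y) * std_normal_density (y - x) \<partial>(mu_meas P a))"
        unfolding mu_eq[OF PS sP a] by simp
    qed
  qed
  show ?thesis
    unfolding P_def[symmetric] using core[OF PS sP a] R G by simp
qed

end
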